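(* Let $S:\mathbb{R}^m\times\mathbb{R}^n\to\mathbb{R}^q$ be bilinear with lifted operator $\mathscr{S}$, let $\mathcal{K}'\subseteq\mathbb{R}^{m\times n}$, $\mathcal{M}=\mathcal{K}'-\mathcal{K}'$, and assume $\mathcal{N}(\mathscr{S},1)\cap\mathcal{M}=\{0\}$. Let $X\in\mathcal{N}(\mathscr{S},2)\cap\mathcal{M}\setminus\{0\}$ and $\delta\in(0,1)$. If $x\in\mathbb{R}^m$ has independent entries each with the symmetric Bernoulli distribution ($\Pr(x_i=1)=\Pr(x_i=-1)=1/2$), then $$\Pr\big(\|P_{\mathcal{C}(X)}x\|_2^2\ge(1-\delta)\|x\|_2^2\big)\le\exp\Big[-\tfrac{m(1-\delta)}{4}+\log4\Big].$$
   Context: For $j=1,\dots,q$ let $S_j$ be the unique matrix with $(S(x,y))_j=x^TS_jy$; the lifted operator is $(\mathscr{S}(W))_j=\operatorname{tr}(S_j^TW)$. $\mathcal{N}(\mathscr{S},k)=\{X:\operatorname{rank}(X)\le k,\ \mathscr{S}(X)=0\}$; $\mathcal{K}'-\mathcal{K}'=\{X_1-X_2:X_1,X_2\in\mathcal{K}'\}$. $\mathcal{C}(X)$ is the column space of $X$ and $P_{\mathcal{C}(X)}$ the orthogonal projection onto it. *)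

theory Defs
  imports "HOL-Analysis.Analysis" "HOL-Probability.Probability"
begin

text \<open>The matrix S_j with (S(x,y))_j = x^T S_j y (rows indexed by 'm, columns by 'n).\<close>
definition bilin_mat :: "(real^'m \<Rightarrow> real^'n \<Rightarrow> real^'q) \<Rightarrow> 'q \<Rightarrow> real^'n^'m" where
  "bilin_mat S j = (\<chi> i k. S (axis i 1) (axis k 1) $ j)"

definition lifted :: "(real^'m \<Rightarrow> real^'n \<Rightarrow> real^'q) \<Rightarrow> real^'n^'m \<Rightarrow> real^'q" where
  "lifted S W = (\<chi> j. trace (transpose (bilin_mat S j) ** W))"

definition null_rank :: "(real^'m \<Rightarrow> real^'n \<Rightarrow> real^'q) \<Rightarrow> nat \<Rightarrow> (real^'n^'m) set" where
  "null_rank S k = {X. rank X \<le> k \<and> lifted S X = 0}"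

definition set_diffs :: "(real^'n^'m) set \<Rightarrow> (real^'n^'m) set" where
  "set_diffs K = {X1 - X2 | X1 X2. X1 \<in> K \<and> X2 \<in> K}"

definition col_space :: "real^'n^'m \<Rightarrow> (real^'m) set" where
  "col_space X = span (columns X)"

definition orth_proj :: "(real^'m) set \<Rightarrow> real^'m \<Rightarrow> real^'m" where
  "orth_proj V x = (THE y. y \<in> V \<and> (\<forall>v\<in>V. (x - y) \<bullet> v = 0))"

text \<open>Rademacher vector: independent symmetric Bernoulli entries = uniform on the hypercube.\<close>
definition rademacher_vec :: "(real^'m) pmf" where
  "rademacher_vec = pmf_of_set {x. \<forall>i. x $ i \<in> {-1, 1}}"

end

theory Submission
  imports Defs
begin

lemma cosh_bound: "(exp a + exp (-a)) / 2 \<le> exp (a\<^sup>2 / 2)" for a :: real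
proof -
  have main: "(exp a + exp (-a)) / 2 \<le> exp (a\<^sup>2 / 2)" if "a \<ge> 0" for a :: real
  proof -
    have h1: "-(2*a) * (1/2) + ln (1 + (1/2) * (exp (2*a) - 1)) \<le> (2*a)\<^sup>2 / 8"
      using Hoeffdings_lemma_aux[of "2*a" "1/2"] that by simp
    have h2: "1 + (1/2) * (exp (2*a) - 1) = exp a * ((exp a + exp (-a)) / 2)"
      using exp_add[of a a] by (simp add: field_simps exp_minus mult_2)
    have h3: "ln (exp a * ((exp a + exp (-a)) / 2)) = a + ln ((exp a + exp (-a)) / 2)"
    proof -
      have "(exp a + exp (-a)) / 2 > 0" by (simp add: add_pos_pos)
      thus ?thesis by (subst ln_mult) auto
    qed
    have "ln ((exp a + exp (-a)) / 2) \<le> a\<^sup>2/2" using h1 unfolding h2 h3 by (simp add: power2_eq_square)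
    hence "exp (ln ((exp a + exp (-a)) / 2)) \<le> exp (a\<^sup>2/2)" by simp
    thus ?thesis by (simp add: add_pos_pos)
  qed
  show ?thesis
  proof (cases "a \<ge> 0")
    case True thus ?thesis using main by blast
  next
    case False thus ?thesis using main[of "-a"] by (simp add: add.commute)
  qed
qed

definition cube :: "(real^'m) set" where "cube = {x. \<forall>i. x $ i \<in> {-1, 1}}"

lemma cube_image: "cube = vec_lambda ` (PiE UNIV (\<lambda>_. {-1, 1::real}))"
proof (rule set_eqI, rule iffI)
  fix x :: "real^'m" assume "x \<in> cube"
  hence "(\<lambda>i. x $ i) \<in> PiE UNIV (\<lambda>_. {-1, 1::real})" by (auto simp: cube_def)
  moreover have "x = vec_lambda (\<lambda>i. x $ i)" by simp
  ultimately show "x \<in> vec_lambda ` (PiE UNIV (\<lambda>_. {-1, 1::real}))" by blast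
qed (auto simp: cube_def PiE_iff)

lemma cube_inj: "inj_on (vec_lambda :: ('m::finite \<Rightarrow> real) \<Rightarrow> real^'m) (PiE UNIV (\<lambda>_. {-1, 1::real}))"
  by (rule inj_onI) (metis vec_lambda_inverse UNIV_I PiE_E)

lemma finite_cube: "finite (cube :: (real^'m) set)"
  unfolding cube_image by (intro finite_imageI finite_PiE) auto

lemma card_cube: "card (cube :: (real^'m) set) = 2 ^ CARD('m)"
  unfolding cube_image card_image[OF cube_inj] by (simp add: card_PiE numeral_2_eq_2)

lemma cube_ne: "(cube :: (real^'m) set) \<noteq> {}"
  using card_cube[where 'm='m] by (metis card.empty power_not_zero zero_neq_numeral)

lemma sum_cube_exp:
  fixes u :: "real^'m" and l :: real
  shows "(\<Sum>x\<in>cube. exp (l * (u \<bullet> x))) = (\<Prod>i\<in>UNIV. exp (l * u$i) + exp (- (l * u$i)))"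
proof -
  have "(\<Sum>x\<in>cube. exp (l * (u \<bullet> x))) =
        (\<Sum>g\<in>PiE UNIV (\<lambda>_. {-1, 1::real}). exp (l * (u \<bullet> vec_lambda g)))"
    unfolding cube_image sum.reindex[OF cube_inj] by (simp add: o_def)
  also have "\<dots> = (\<Sum>g\<in>PiE UNIV (\<lambda>_. {-1, 1::real}). \<Prod>i\<in>UNIV. exp (l * u$i * g i))"
    by (intro sum.cong refl) (simp add: inner_vec_def exp_sum[symmetric] sum_distrib_left mult.assoc)
  also have "\<dots> = (\<Prod>i\<in>UNIV. \<Sum>s\<in>{-1,1::real}. exp (l * u$i * s))"
    by (rule prod_sum_PiE[symmetric]) auto
  also have "\<dots> = (\<Prod>i\<in>UNIV. exp (l * u$i) + exp (- (l * u$i)))"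
    by (intro prod.cong refl) simp
  finally show ?thesis .
qed

lemma sum_cube_exp_le:
  fixes u :: "real^'m" and l :: real
  shows "(\<Sum>x\<in>cube. exp (l * (u \<bullet> x))) \<le> 2 ^ CARD('m) * exp (l\<^sup>2 * (norm u)\<^sup>2 / 2)"
proof -
  have "(\<Prod>i\<in>UNIV. exp (l * u$i) + exp (- (l * u$i))) \<le> (\<Prod>i\<in>(UNIV::'m set). 2 * exp ((l * u$i)\<^sup>2 / 2))"
    apply (rule prod_mono)
    using cosh_bound by (auto intro: add_nonneg_nonneg) (smt (verit) cosh_bound)
  also have "\<dots> = 2 ^ CARD('m) * exp (\<Sum>i\<in>UNIV. (l * u$i)\<^sup>2 / 2)"
    by (simp add: prod.distrib exp_sum)
  also have "(\<Sum>i\<in>UNIV. (l * u$i)\<^sup>2 / 2) = l\<^sup>2 * (norm u)\<^sup>2 / 2"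
  proof -
    have "(norm u)\<^sup>2 = (\<Sum>i\<in>UNIV. (u$i)\<^sup>2)"
      unfolding power2_norm_eq_inner inner_vec_def by (simp add: power2_eq_square)
    thus ?thesis by (simp add: power_mult_distrib sum_distrib_left sum_divide_distrib)
  qed
  finally show ?thesis by (simp add: sum_cube_exp)
qed

lemma tail_one:
  fixes u :: "real^'m" and t :: real
  assumes "norm u \<le> 1" "t \<ge> 0"
  shows "real (card {x\<in>cube. u \<bullet> x \<ge> t}) \<le> 2 ^ CARD('m) * exp (- t\<^sup>2 / 2)"
proof -
  let ?A = "{x\<in>cube. u \<bullet> x \<ge> t}"
  have "real (card ?A) = (\<Sum>x\<in>?A. 1)" by simp
  also have "\<dots> \<le> (\<Sum>x\<in>?A. exp (t * (u \<bullet> x)) * exp (- t\<^sup>2))"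
  proof (rule sum_mono)
    fix x assume "x \<in> ?A"
    hence "t * (u \<bullet> x) \<ge> t * t" using assms(2) by (simp add: mult_left_mono)
    hence "t * (u \<bullet> x) + - t\<^sup>2 \<ge> 0" by (simp add: power2_eq_square)
    hence "1 \<le> exp (t * (u \<bullet> x) + - t\<^sup>2)" by simp
    thus "1 \<le> exp (t * (u \<bullet> x)) * exp (- t\<^sup>2)" by (simp only: exp_add)
  qed
  also have "\<dots> \<le> (\<Sum>x\<in>cube. exp (t * (u \<bullet> x)) * exp (- t\<^sup>2))"
    by (rule sum_mono2) (auto simp: finite_cube)
  also have "\<dots> = (\<Sum>x\<in>cube. exp (t * (u \<bullet> x))) * exp (- t\<^sup>2)"
    by (simp add: sum_distrib_right)
  also have "\<dots> \<le> 2 ^ CARD('m) * exp (t\<^sup>2 * (norm u)\<^sup>2 / 2) * exp (- t\<^sup>2)"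
    by (rule mult_right_mono[OF sum_cube_exp_le]) simp
  also have "\<dots> \<le> 2 ^ CARD('m) * exp (t\<^sup>2 / 2) * exp (- t\<^sup>2)"
  proof -
    have "(norm u)\<^sup>2 \<le> 1" using assms(1) by (simp add: power_le_one)
    hence "t\<^sup>2 * (norm u)\<^sup>2 \<le> t\<^sup>2" using mult_left_le[of "(norm u)\<^sup>2" "t\<^sup>2"] by simp
    thus ?thesis by simp
  qed
  also have "\<dots> = 2 ^ CARD('m) * exp (- t\<^sup>2 / 2)"
    by (simp add: mult.assoc exp_add[symmetric])
  finally show ?thesis .
qed

lemma tail_two:
  fixes u :: "real^'m" and s :: real
  assumes "norm u \<le> 1" "s \<ge> 0"
  shows "real (card {x\<in>cube. (u \<bullet> x)\<^sup>2 \<ge> s}) \<le> 2 * 2 ^ CARD('m) * exp (- s / 2)"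
proof -
  let ?t = "sqrt s"
  have sub: "{x\<in>cube. (u \<bullet> x)\<^sup>2 \<ge> s} \<subseteq> {x\<in>cube. u \<bullet> x \<ge> ?t} \<union> {x\<in>cube. (-u) \<bullet> x \<ge> ?t}"
  proof
    fix x assume "x \<in> {x\<in>cube. (u \<bullet> x)\<^sup>2 \<ge> s}"
    hence "x \<in> cube" "s \<le> (u \<bullet> x)\<^sup>2" by auto
    hence "?t \<le> sqrt ((u \<bullet> x)\<^sup>2)" using real_sqrt_le_mono by blast
    hence "?t \<le> \<bar>u \<bullet> x\<bar>" by (simp only: real_sqrt_abs)
    hence "?t \<le> u \<bullet> x \<or> ?t \<le> (-u) \<bullet> x" by (cases "u \<bullet> x \<ge> 0") (simp_all add: inner_minus_left)
    thus "x \<in> {x\<in>cube. u \<bullet> x \<ge> ?t} \<union> {x\<in>cube. (-u) \<bullet> x \<ge> ?t}" using \<open>x \<in> cube\<close>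
      by blast
  qed
  have "real (card {x\<in>cube. (u \<bullet> x)\<^sup>2 \<ge> s}) \<le> real (card ({x\<in>cube. u \<bullet> x \<ge> ?t} \<union> {x\<in>cube. (-u) \<bullet> x \<ge> ?t}))"
    by (intro of_nat_mono card_mono sub) (auto simp: finite_cube)
  also have "\<dots> \<le> real (card {x\<in>cube. u \<bullet> x \<ge> ?t}) + real (card {x\<in>cube. (-u) \<bullet> x \<ge> ?t})"
    by (simp only: of_nat_add[symmetric] of_nat_le_iff card_Un_le)
  also have "\<dots> \<le> 2 ^ CARD('m) * exp (- ?t\<^sup>2 / 2) + 2 ^ CARD('m) * exp (- ?t\<^sup>2 / 2)"
    by (intro add_mono tail_one) (use assms in auto)
  also have "\<dots> = 2 * 2 ^ CARD('m) * exp (- s / 2)" using assms by simp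
  finally show ?thesis .
qed

lemma proj_formula:
  fixes B :: "(real^'m) set" and x :: "real^'m"
  assumes fin: "finite B" and orth: "pairwise orthogonal B" and nrm: "\<And>b. b \<in> B \<Longrightarrow> norm b = 1"
  shows "orth_proj (span B) x = (\<Sum>b\<in>B. (b \<bullet> x) *\<^sub>R b)"
proof -
  define y0 where "y0 = (\<Sum>b\<in>B. (b \<bullet> x) *\<^sub>R b)"
  have y0V: "y0 \<in> span B" unfolding y0_def
    by (intro span_sum span_mul span_base)
  have ob: "(x - y0) \<bullet> b = 0" if "b \<in> B" for b
  proof -
    have "y0 \<bullet> b = (\<Sum>b'\<in>B. (b' \<bullet> x) * (b' \<bullet> b))" unfolding y0_def by (simp add: inner_sum_left)
    also have "\<dots> = (\<Sum>b'\<in>{b}. (b' \<bullet> x) * (b' \<bullet> b))"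
    proof (rule sum.mono_neutral_right)
      show "\<forall>i\<in>B - {b}. (i \<bullet> x) * (i \<bullet> b) = 0"
        using orth that unfolding pairwise_def orthogonal_def by auto
    qed (use fin that in auto)
    also have "\<dots> = b \<bullet> x" using nrm[OF that] by (simp add: inner_commute dot_square_norm)
    finally show ?thesis by (simp add: inner_diff_left inner_commute[of x b])
  qed
  have ov: "(x - y0) \<bullet> v = 0" if "v \<in> span B" for v
    using orthogonal_to_span[OF that, of "x - y0"] ob unfolding orthogonal_def by blast
  show ?thesis unfolding y0_def[symmetric] orth_proj_def
  proof (rule the_equality)
    show "y0 \<in> span B \<and> (\<forall>v\<in>span B. (x - y0) \<bullet> v = 0)" using y0V ov by blast
  next
    fix y assume y: "y \<in> span B \<and> (\<forall>v\<in>span B. (x - y) \<bullet> v = 0)"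
    have d: "y0 - y \<in> span B" using y y0V by (simp add: span_diff)
    have "(y0 - y) \<bullet> (y0 - y) = (x - y) \<bullet> (y0 - y) - (x - y0) \<bullet> (y0 - y)"
      by (simp add: inner_diff_left)
    also have "\<dots> = 0" using y ov[OF d] d by simp
    finally show "y = y0" by simp
  qed
qed

lemma proj_norm:
  fixes B :: "(real^'m) set" and x :: "real^'m"
  assumes fin: "finite B" and orth: "pairwise orthogonal B" and nrm: "\<And>b. b \<in> B \<Longrightarrow> norm b = 1"
  shows "(norm (orth_proj (span B) x))\<^sup>2 = (\<Sum>b\<in>B. (b \<bullet> x)\<^sup>2)"
proof -
  have "(norm (\<Sum>b\<in>B. (b \<bullet> x) *\<^sub>R b))\<^sup>2 = (\<Sum>b\<in>B. (norm ((b \<bullet> x) *\<^sub>R b))\<^sup>2)"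
    by (rule norm_sum_Pythagorean[OF fin])
       (use orth in \<open>auto simp: pairwise_def orthogonal_clauses\<close>)
  also have "\<dots> = (\<Sum>b\<in>B. (b \<bullet> x)\<^sup>2)"
    by (intro sum.cong refl) (simp add: nrm power_mult_distrib)
  finally show ?thesis by (simp add: proj_formula[OF assms])
qed

lemma norm_cube: "x \<in> cube \<Longrightarrow> (norm x)\<^sup>2 = real CARD('m)" for x :: "real^'m"
proof -
  assume "x \<in> cube"
  have "x $ i * x $ i = 1" for i
  proof -
    have "x $ i = -1 \<or> x $ i = 1" using \<open>x \<in> cube\<close> by (auto simp: cube_def)
    thus ?thesis by auto
  qed
  thus ?thesis unfolding power2_norm_eq_inner inner_vec_def by simp
qed

lemma prob_cube: "measure_pmf.prob (pmf_of_set (cube::(real^'m) set)) A = real (card (cube \<inter> A)) / real (card (cube::(real^'m) set))"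
  using cube_ne finite_cube by (rule measure_pmf_of_set)

theorem lemma4:
  fixes S :: "real^'m \<Rightarrow> real^'n \<Rightarrow> real^'q"
    and K' :: "(real^'n^'m) set"
    and X :: "real^'n^'m"
    and \<delta> :: real
  assumes "bilinear S"
    and "null_rank S 1 \<inter> set_diffs K' = {0}"
    and "X \<in> null_rank S 2 \<inter> set_diffs K' - {0}"
    and "0 < \<delta>" and "\<delta> < 1"
  shows "measure_pmf.prob rademacher_vec
           {x. (norm (orth_proj (col_space X) x))\<^sup>2 \<ge> (1 - \<delta>) * (norm x)\<^sup>2}
         \<le> exp (- (real CARD('m) * (1 - \<delta>) / 4) + ln 4)"
proof -
  let ?V = "col_space X"
  let ?m = "real CARD('m)"
  define c where "c = (1 - \<delta>) * ?m"
  have cpos: "c > 0" using assms(5) by (simp add: c_def)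
  have rk: "rank X \<le> 2" using assms(3) by (simp add: null_rank_def)
  have dimV: "dim ?V \<le> 2" using rk unfolding col_space_def by (simp add: dim_span column_rank_def)
  have "subspace ?V" unfolding col_space_def by simp
  then obtain B where B: "B \<subseteq> ?V" "pairwise orthogonal B" "\<And>x. x \<in> B \<Longrightarrow> norm x = 1"
    "independent B" "card B = dim ?V" "span B = ?V"
    using orthonormal_basis_subspace by blast
  have finB: "finite B" using B(4) independent_imp_finite by blast
  have cardB: "card B \<le> 2" using B(5) dimV by simp
  let ?E = "{x. (norm (orth_proj ?V x))\<^sup>2 \<ge> (1 - \<delta>) * (norm x)\<^sup>2}"
  have sub: "cube \<inter> ?E \<subseteq> (\<Union>b\<in>B. {x\<in>cube. (b \<bullet> x)\<^sup>2 \<ge> c / 2})"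
  proof
    fix x assume x: "x \<in> cube \<inter> ?E"
    have "(\<Sum>b\<in>B. (b \<bullet> x)\<^sup>2) \<ge> c"
      using x proj_norm[OF finB B(2) B(3), of x] B(6) norm_cube[of x] by (simp add: c_def)
    have "\<exists>b\<in>B. (b \<bullet> x)\<^sup>2 \<ge> c / 2"
    proof (rule ccontr)
      assume "\<not> ?thesis"
      hence lt: "\<And>b. b \<in> B \<Longrightarrow> (b \<bullet> x)\<^sup>2 < c / 2" by auto
      show False
      proof (cases "B = {}")
        case True thus False using \<open>(\<Sum>b\<in>B. (b \<bullet> x)\<^sup>2) \<ge> c\<close> cpos by simp
      next
        case False
        have "(\<Sum>b\<in>B. (b \<bullet> x)\<^sup>2) < (\<Sum>b\<in>B. c / 2)"
          by (rule sum_strict_mono[OF finB False lt])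
        also have "\<dots> = real (card B) * (c / 2)" by simp
        also have "\<dots> \<le> 2 * (c / 2)"
          using cardB cpos by (intro mult_right_mono) auto
        finally show False using \<open>(\<Sum>b\<in>B. (b \<bullet> x)\<^sup>2) \<ge> c\<close> by simp
      qed
    qed
    thus "x \<in> (\<Union>b\<in>B. {x\<in>cube. (b \<bullet> x)\<^sup>2 \<ge> c / 2})" using x by blast
  qed
  have "real (card (cube \<inter> ?E)) \<le> real (card (\<Union>b\<in>B. {x\<in>cube. (b \<bullet> x)\<^sup>2 \<ge> c / 2}))"
    by (intro of_nat_mono card_mono sub) (auto simp: finite_cube finB)
  also have "\<dots> \<le> real (\<Sum>b\<in>B. card {x\<in>cube. (b \<bullet> x)\<^sup>2 \<ge> c / 2})"
    by (intro of_nat_mono card_UN_le finB)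
  also have "\<dots> = (\<Sum>b\<in>B. real (card {x\<in>cube. (b \<bullet> x)\<^sup>2 \<ge> c / 2}))" by simp
  also have "\<dots> \<le> (\<Sum>b\<in>B. 2 * 2 ^ CARD('m) * exp (- (c / 2) / 2))"
    by (intro sum_mono tail_two) (use B(3) cpos in auto)
  also have "\<dots> = real (card B) * (2 * 2 ^ CARD('m) * exp (- c / 4))" by simp
  also have "\<dots> \<le> 2 * (2 * 2 ^ CARD('m) * exp (- c / 4))"
    using cardB by (intro mult_right_mono) auto
  finally have cardE: "real (card (cube \<inter> ?E)) \<le> 4 * 2 ^ CARD('m) * exp (- c / 4)" by simp
  have "(rademacher_vec :: (real^'m) pmf) = pmf_of_set cube" unfolding rademacher_vec_def cube_def by simp
  hence "measure_pmf.prob rademacher_vec ?E = real (card (cube \<inter> ?E)) / real (card (cube :: (real^'m) set))"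
  proof -
    assume h: "(rademacher_vec :: (real^'m) pmf) = pmf_of_set cube"
    show ?thesis unfolding h
      by (rule prob_cube)
  qed
  also have "\<dots> \<le> 4 * exp (- c / 4)"
    using cardE by (simp add: card_cube divide_le_eq mult_ac)
  also have "\<dots> = exp (- (?m * (1 - \<delta>) / 4) + ln 4)"
  proof -
    have e: "- (?m * (1 - \<delta>) / 4) = - c / 4" by (simp add: c_def mult.commute)
    show ?thesis unfolding e exp_add by simp
  qed
  finally show ?thesis .
qed

end
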